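(* For all $k\geq 0,l\geq 1$ and $k+l$ even, one has \[\langle T_{k,l}\rangle_q = \begin{cases} D^{l-1}G_{k-l+2} & \text{if } k-l\geq 0, \\ D^k G_{l-k} & \text{if } k-l\leq 2.\end{cases}\]
   Context: $\mathscr{P}$ is the set of partitions, $r_m(\lambda)$ the number of parts of $\lambda$ equal to $m$, and $\langle f\rangle_q=\sum_\lambda f(\lambda)q^{|\lambda|}/\sum_\lambda q^{|\lambda|}$. The Faulhaber polynomial $F_l$ is the polynomial with zero constant term with $F_l(n)=\sum_{i=1}^n i^{l-1}$ for $n\ge1$. $T_{k,l}(\lambda)=-\frac{B_{k+l}}{2(k+l)}(\delta_{l,1}+\delta_{k,0})+\sum_{m\ge1}m^kF_l(r_m(\lambda))$; equivalently, with $c_i(\lambda)=\#\{j\le i\mid\lambda_j=\lambda_i\}$, $T_{k,l}(\lambda)=-\frac{B_{k+l}}{2(k+l)}(\delta_{l,1}+\delta_{k,0})+\sum_i\lambda_i^kc_i(\lambda)^{l-1}$. $G_k=-\frac{B_k}{2k}+\sum_{r,m\ge1}m^{k-1}q^{mr}$ are the Eisenstein series and $D=q\frac{d}{dq}$. *)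

theory Defs
  imports "HOL-Library.Multiset" "HOL-Computational_Algebra.Formal_Power_Series"
begin

text \<open>Bernoulli numbers, via the standard recursion
  sum_{j=0}^{n} binom(n+1,j) B_j = 0 for n >= 1, B_0 = 1
  (so B_1 = -1/2; only even indices are used below).\<close>
fun bernoulli :: "nat \<Rightarrow> real" where
  "bernoulli n = (if n = 0 then 1
     else - (\<Sum>j<n. real ((n + 1) choose j) * bernoulli j) / real (n + 1))"

text \<open>Partitions are finite multisets of positive integers (their parts);
  r_m(lambda) = count lambda m, |lambda| = sum of the parts.\<close>
definition partitions :: "nat \<Rightarrow> nat multiset set" where
  "partitions n = {p. (\<forall>m\<in>#p. 0 < m) \<and> sum_mset p = n}"

definition part_gen :: "(nat multiset \<Rightarrow> real) \<Rightarrow> real fps" where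
  "part_gen f = Abs_fps (\<lambda>n. \<Sum>p\<in>partitions n. f p)"

definition qbracket :: "(nat multiset \<Rightarrow> real) \<Rightarrow> real fps" where
  "qbracket f = part_gen f / part_gen (\<lambda>_. 1)"

text \<open>Faulhaber polynomial F_l evaluated at a nonnegative integer n:
  F_l(n) = sum_{i=1}^n i^(l-1) (and F_l(0) = 0 since F_l has zero constant term).\<close>
definition faulhaber :: "nat \<Rightarrow> nat \<Rightarrow> real" where
  "faulhaber l n = (\<Sum>i=1..n. real i ^ (l - 1))"

definition kronecker :: "nat \<Rightarrow> nat \<Rightarrow> real" where
  "kronecker a b = (if a = b then 1 else 0)"

text \<open>T_{k,l}(lambda). The sum over m >= 1 is restricted to parts of lambda,
  since F_l(r_m(lambda)) = F_l(0) = 0 otherwise.\<close>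
definition T :: "nat \<Rightarrow> nat \<Rightarrow> nat multiset \<Rightarrow> real" where
  "T k l p = - bernoulli (k + l) / (2 * real (k + l)) * (kronecker l 1 + kronecker k 0)
     + (\<Sum>m\<in>set_mset p. real m ^ k * faulhaber l (count p m))"

text \<open>Eisenstein series G_k = -B_k/(2k) + sum_{r,m>=1} m^(k-1) q^(mr).\<close>
definition eisenstein :: "nat \<Rightarrow> real fps" where
  "eisenstein k = Abs_fps (\<lambda>n. if n = 0 then - bernoulli k / (2 * real k)
     else (\<Sum>d | d dvd n. real d ^ (k - 1)))"

definition qD :: "real fps \<Rightarrow> real fps" where
  "qD f = fps_X * fps_deriv f"

end

theory Submission imports Defs begin

lemma size_le_sum_pos: "(\<forall>m\<in>#p. 0 < (m::nat)) \<Longrightarrow> size p \<le> sum_mset p"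
  by (induction p) auto

lemma mem_le_sum: "(m::nat) \<in># p \<Longrightarrow> m \<le> sum_mset p"
  by (induction p) auto

lemma finite_partitions: "finite (partitions n)"
proof -
  have "partitions n \<subseteq> mset ` {xs. set xs \<subseteq> {0..n} \<and> length xs \<le> n}"
  proof
    fix p assume p: "p \<in> partitions n"
    then have "size p \<le> n" "\<forall>m\<in>#p. m \<le> n" using size_le_sum_pos mem_le_sum
      unfolding partitions_def by auto
    then show "p \<in> mset ` {xs. set xs \<subseteq> {0..n} \<and> length xs \<le> n}"
      by (intro image_eqI[of _ _ "sorted_list_of_multiset p"]) (auto, metis mset_sorted_list_of_multiset size_mset)
  qed
  moreover have "finite {xs. set xs \<subseteq> {0..n} \<and> length xs \<le> n}"
    by (rule finite_lists_length_le) auto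
  ultimately show ?thesis by (meson finite_imageI finite_subset)
qed

lemma partitions_0: "partitions 0 = {{#}}"
  unfolding partitions_def by (auto, metis less_irrefl multiset_nonemptyE)

lemma card_count_ge:
  assumes "0 < m" "0 < r" "m * r \<le> n"
  shows "card {p\<in>partitions n. r \<le> count p m} = card (partitions (n - m * r))"
proof -
  have "bij_betw (\<lambda>q. q + replicate_mset r m) (partitions (n - m * r)) {p\<in>partitions n. r \<le> count p m}"
  proof (rule bij_betw_byWitness[where f' = "\<lambda>p. p - replicate_mset r m"])
    show "\<forall>a\<in>partitions (n - m * r). a + replicate_mset r m - replicate_mset r m = a" by simp
    show "\<forall>a'\<in>{p \<in> partitions n. r \<le> count p m}. a' - replicate_mset r m + replicate_mset r m = a'"
      by (auto simp: count_le_replicate_mset_subset_eq subset_mset.diff_add)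
    show "(\<lambda>q. q + replicate_mset r m) ` partitions (n - m * r) \<subseteq> {p \<in> partitions n. r \<le> count p m}"
      using assms by (auto simp: partitions_def)
    show "(\<lambda>p. p - replicate_mset r m) ` {p \<in> partitions n. r \<le> count p m} \<subseteq> partitions (n - m * r)"
      using assms by (auto simp: partitions_def count_le_replicate_mset_subset_eq sum_mset_diff mult.commute
          dest: in_diffD)
  qed
  then show ?thesis by (metis bij_betw_same_card)
qed

lemma card_count_ge0:
  assumes "0 < m" "n < m * r"
  shows "{p\<in>partitions n. r \<le> count p m} = {}"
proof -
  { fix p assume p: "p \<in> partitions n" "r \<le> count p m"
    then have "replicate_mset r m \<subseteq># p" by (simp add: count_le_replicate_mset_subset_eq)
    then have "sum_mset (replicate_mset r m) \<le> sum_mset p"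
      by (metis le_add1 subset_mset.add_diff_inverse sum_mset.union)
    with p assms have False by (auto simp: partitions_def mult.commute) }
  then show ?thesis by auto
qed


lemma inner_expand:
  assumes p: "p \<in> partitions n"
  shows "(\<Sum>m\<in>set_mset p. real m ^ k * faulhaber l (count p m))
     = (\<Sum>m\<in>{1..n}. \<Sum>r\<in>{1..n}. if r \<le> count p m then real m ^ k * real r ^ (l-1) else 0)"
proof -
  have pos: "\<forall>m\<in>#p. 0 < m" and sp: "sum_mset p = n" using p by (auto simp: partitions_def)
  have cn: "count p m \<le> n" for m
    using count_le_size[of p m] size_le_sum_pos[OF pos] sp by linarith
  have "(\<Sum>m\<in>set_mset p. real m ^ k * faulhaber l (count p m))
      = (\<Sum>m\<in>set_mset p. \<Sum>r\<in>{1..n}. if r \<le> count p m then real m ^ k * real r ^ (l-1) else 0)"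
  proof (rule sum.cong[OF refl])
    fix m assume "m \<in> set_mset p"
    have "(\<Sum>r\<in>{1..n}. if r \<le> count p m then real m ^ k * real r ^ (l-1) else 0)
        = (\<Sum>r\<in>{r\<in>{1..n}. r \<le> count p m}. real m ^ k * real r ^ (l-1))"
      by (rule sum.inter_filter[symmetric]) auto
    also have "{r\<in>{1..n}. r \<le> count p m} = {1..count p m}" using cn[of m] by auto
    finally show "real m ^ k * faulhaber l (count p m) = (\<Sum>r\<in>{1..n}. if r \<le> count p m then real m ^ k * real r ^ (l-1) else 0)"
      by (simp add: faulhaber_def sum_distrib_left)
  qed
  also have "\<dots> = (\<Sum>m\<in>{1..n}. \<Sum>r\<in>{1..n}. if r \<le> count p m then real m ^ k * real r ^ (l-1) else 0)"
  proof (rule sum.mono_neutral_left)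
    show "set_mset p \<subseteq> {1..n}" using pos mem_le_sum sp by (auto simp: Suc_le_eq)
    show "\<forall>i\<in>{1..n} - set_mset p. (\<Sum>r\<in>{1..n}. if r \<le> count p i then real i ^ k * real r ^ (l-1) else 0) = 0"
      by (auto simp: not_in_iff)
  qed auto
  finally show ?thesis .
qed

lemma pair_reindex:
  fixes g :: "nat \<Rightarrow> nat \<Rightarrow> real"
  shows "(\<Sum>j=1..n. \<Sum>d | d dvd j. g d (j div d))
     = (\<Sum>m\<in>{1..n}. \<Sum>r\<in>{1..n}. if m * r \<le> n then g m r else 0)"
proof -
  have fin: "finite {d. d dvd j}" if "j \<in> {1..n}" for j :: nat
    using that by (auto intro: finite_divisors_nat)
  have "(\<Sum>j=1..n. \<Sum>d | d dvd j. g d (j div d)) = (\<Sum>(j,d)\<in>Sigma {1..n} (\<lambda>j. {d. d dvd j}). g d (j div d))"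
    using fin by (subst sum.Sigma) auto
  also have "\<dots> = (\<Sum>(m,r)\<in>{(m,r)\<in>{1..n}\<times>{1..n}. m * r \<le> n}. g m r)"
  proof (rule sum.reindex_bij_witness[where i = "\<lambda>(m,r). (m*r, m)" and j = "\<lambda>(j,d). (d, j div d)"])
    fix a assume "a \<in> Sigma {1..n} (\<lambda>j. {d. d dvd j})"
    then obtain j d where a: "a = (j,d)" "1 \<le> j" "j \<le> n" "d dvd j" by auto
    then have "0 < d" "0 < j div d" using a by (auto elim!: dvdE)
    moreover have "d \<le> n" using a by (meson dual_order.trans dvd_imp_le le_less_trans not_le zero_less_one)
    moreover have "j div d \<le> n" using a by (meson div_le_dividend le_trans)
    ultimately show "(\<lambda>(j,d). (d, j div d)) a \<in> {(m,r)\<in>{1..n}\<times>{1..n}. m * r \<le> n}"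
      using a by auto
    show "(\<lambda>(m,r). (m*r, m)) ((\<lambda>(j,d). (d, j div d)) a) = a" using a by auto
    show "(case (\<lambda>(j,d). (d, j div d)) a of (m,r) \<Rightarrow> g m r) = (case a of (j,d) \<Rightarrow> g d (j div d))"
      using a by auto
  next
    fix b assume "b \<in> {(m,r)\<in>{1..n}\<times>{1..n}. m * r \<le> n}"
    then obtain m r where b: "b = (m,r)" "1 \<le> m" "1 \<le> r" "m * r \<le> n" by auto
    then show "(\<lambda>(j,d). (d, j div d)) ((\<lambda>(m,r). (m*r, m)) b) = b" by auto
    from b have "1 \<le> m * r" by (simp add: Suc_le_eq)
    with b show "(\<lambda>(m,r). (m*r, m)) b \<in> Sigma {1..n} (\<lambda>j. {d. d dvd j})" by auto
  qed
  also have "\<dots> = (\<Sum>(m,r)\<in>{1..n}\<times>{1..n}. if m * r \<le> n then g m r else 0)"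
  proof -
    have e: "{(m,r)\<in>{1..n}\<times>{1..n}. m*r \<le> n} = {x\<in>{1..n}\<times>{1..n}. fst x * snd x \<le> n}" by auto
    show ?thesis unfolding e
      by (subst sum.inter_filter) (auto simp: case_prod_beta intro!: sum.cong split: prod.split)
  qed
  also have "\<dots> = (\<Sum>m\<in>{1..n}. \<Sum>r\<in>{1..n}. if m * r \<le> n then g m r else 0)"
    by (simp add: sum.cartesian_product)
  finally show ?thesis .
qed


lemma comb:
  "(\<Sum>p\<in>partitions n. \<Sum>m\<in>set_mset p. real m ^ k * faulhaber l (count p m))
   = (\<Sum>j=1..n. real (card (partitions (n-j))) * (\<Sum>d | d dvd j. real d ^ k * real (j div d) ^ (l-1)))"
proof -
  define w where "w m r = real m ^ k * real r ^ (l-1)" for m r :: nat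
  have "(\<Sum>p\<in>partitions n. \<Sum>m\<in>set_mset p. real m ^ k * faulhaber l (count p m))
      = (\<Sum>p\<in>partitions n. \<Sum>m\<in>{1..n}. \<Sum>r\<in>{1..n}. if r \<le> count p m then w m r else 0)"
    unfolding w_def by (rule sum.cong[OF refl], rule inner_expand)
  also have "\<dots> = (\<Sum>m\<in>{1..n}. \<Sum>r\<in>{1..n}. \<Sum>p\<in>partitions n. if r \<le> count p m then w m r else 0)"
    by (subst sum.swap) (subst sum.swap, rule refl)
  also have "\<dots> = (\<Sum>m\<in>{1..n}. \<Sum>r\<in>{1..n}. w m r * real (card {p\<in>partitions n. r \<le> count p m}))"
    by (intro sum.cong refl, subst sum.inter_filter[symmetric]) (auto simp: finite_partitions)
  also have "\<dots> = (\<Sum>m\<in>{1..n}. \<Sum>r\<in>{1..n}. if m * r \<le> n then real (card (partitions (n - m * r))) * w m r else 0)"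
  proof (intro sum.cong refl)
    fix m r assume "m \<in> {1..n}" "r \<in> {1..n}"
    then have "0 < m" "0 < r" by auto
    then show "w m r * real (card {p\<in>partitions n. r \<le> count p m})
       = (if m * r \<le> n then real (card (partitions (n - m * r))) * w m r else 0)"
      using card_count_ge[of m r n] card_count_ge0[of m n r] by (cases "m * r \<le> n") (auto simp del: Collect_empty_eq)
  qed
  also have "\<dots> = (\<Sum>j=1..n. \<Sum>d | d dvd j. real (card (partitions (n - d * (j div d)))) * w d (j div d))"
    by (rule pair_reindex[symmetric])
  also have "\<dots> = (\<Sum>j=1..n. real (card (partitions (n-j))) * (\<Sum>d | d dvd j. w d (j div d)))"
    by (intro sum.cong refl) (auto simp: sum_distrib_left)
  finally show ?thesis unfolding w_def .
qed


definition Hc :: "nat \<Rightarrow> nat \<Rightarrow> real" where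
  "Hc k l = - bernoulli (k + l) / (2 * real (k + l)) * (kronecker l 1 + kronecker k 0)"

definition Hs :: "nat \<Rightarrow> nat \<Rightarrow> real fps" where
  "Hs k l = Abs_fps (\<lambda>j. if j = 0 then 0 else (\<Sum>d | d dvd j. real d ^ k * real (j div d) ^ (l-1)))"

lemma part_gen_T: "part_gen (T k l) = part_gen (\<lambda>_. 1) * (fps_const (Hc k l) + Hs k l)"
proof (rule fps_ext)
  fix n
  have "fps_nth (part_gen (T k l)) n = Hc k l * real (card (partitions n))
     + (\<Sum>p\<in>partitions n. \<Sum>m\<in>set_mset p. real m ^ k * faulhaber l (count p m))"
    by (simp add: part_gen_def T_def Hc_def sum.distrib)
  also have "\<dots> = Hc k l * real (card (partitions n)) + (\<Sum>j=1..n. real (card (partitions (n-j))) * (\<Sum>d | d dvd j. real d ^ k * real (j div d) ^ (l-1)))"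
    by (simp add: comb)
  also have "(\<Sum>j=1..n. real (card (partitions (n-j))) * (\<Sum>d | d dvd j. real d ^ k * real (j div d) ^ (l-1)))
     = (\<Sum>j=0..n. fps_nth (Hs k l) j * fps_nth (part_gen (\<lambda>_. 1)) (n - j))"
    by (simp add: sum.atLeast_Suc_atMost Hs_def part_gen_def mult.commute)
  also have "\<dots> = fps_nth (Hs k l * part_gen (\<lambda>_. 1)) n" by (simp add: fps_mult_nth)
  finally show "fps_nth (part_gen (T k l)) n = fps_nth (part_gen (\<lambda>_. 1) * (fps_const (Hc k l) + Hs k l)) n"
    by (simp add: distrib_left mult.commute part_gen_def)
qed

lemma qbracket_T: "qbracket (T k l) = fps_const (Hc k l) + Hs k l"
proof -
  have "fps_nth (part_gen (\<lambda>_. 1)) 0 = 1" by (simp add: part_gen_def partitions_0)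
  then have "part_gen (\<lambda>_. 1) \<noteq> 0" by auto
  then show ?thesis unfolding qbracket_def part_gen_T by simp
qed

lemma qD_pow_nth: "fps_nth ((qD ^^ j) f) n = real n ^ j * fps_nth f n"
  by (induction j) (auto simp: qD_def)


lemma divsum1:
  assumes "0 < n" "1 \<le> l" "l \<le> k"
  shows "real n ^ (l-1) * (\<Sum>d | d dvd n. real d ^ (k - l + 2 - 1))
       = (\<Sum>d | d dvd n. real d ^ k * real (n div d) ^ (l-1))"
  unfolding sum_distrib_left
proof (intro sum.cong refl)
  fix d assume "d \<in> {d. d dvd n}"
  then obtain e where e: "n = d * e" by auto
  with assms have "0 < d" by auto
  have ex: "(l-1) + (k - l + 2 - 1) = k" using assms by arith
  have "real d ^ (l-1) * real d ^ (k - l + 2 - 1) = real d ^ k"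
    by (metis ex power_add)
  then show "real n ^ (l-1) * real d ^ (k - l + 2 - 1) = real d ^ k * real (n div d) ^ (l-1)"
    using e \<open>0 < d\<close> by (simp add: power_mult_distrib mult_ac)
qed

lemma divsum_swap:
  assumes "0 < n"
  shows "(\<Sum>d | d dvd n. g d (n div d)) = (\<Sum>d | d dvd n. g (n div d) (d::nat))"
  by (rule sum.reindex_bij_witness[where i = "\<lambda>d. n div d" and j = "\<lambda>d. n div d"])
     (use assms in \<open>auto elim!: dvdE\<close>)

lemma divsum2:
  assumes "0 < n" "k + 2 \<le> l"
  shows "real n ^ k * (\<Sum>d | d dvd n. real d ^ (l - k - 1))
       = (\<Sum>d | d dvd n. real d ^ k * real (n div d) ^ (l-1))"
  unfolding divsum_swap[OF assms(1), of "\<lambda>a b. real a ^ k * real b ^ (l-1)"] sum_distrib_left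
proof (intro sum.cong refl)
  fix d assume "d \<in> {d. d dvd n}"
  then obtain e where e: "n = d * e" by auto
  with assms have "0 < d" by auto
  have ex: "k + (l - k - 1) = l - 1" using assms by arith
  have "real d ^ k * real d ^ (l - k - 1) = real d ^ (l - 1)"
    by (metis ex power_add)
  then show "real n ^ k * real d ^ (l - k - 1) = real (n div d) ^ k * real d ^ (l-1)"
    using e \<open>0 < d\<close> by (simp add: power_mult_distrib mult_ac)
qed

theorem proposition3p1p2:
  fixes k l :: nat
  assumes "l \<ge> 1" and "even (k + l)"
  shows "(l \<le> k \<longrightarrow> qbracket (T k l) = (qD ^^ (l - 1)) (eisenstein (k - l + 2)))
       \<and> (k + 2 \<le> l \<longrightarrow> qbracket (T k l) = (qD ^^ k) (eisenstein (l - k)))"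
proof (intro conjI impI)
  assume kl: "l \<le> k"
  show "qbracket (T k l) = (qD ^^ (l - 1)) (eisenstein (k - l + 2))"
    unfolding qbracket_T
  proof (rule fps_ext)
    fix n
    show "fps_nth (fps_const (Hc k l) + Hs k l) n = fps_nth ((qD ^^ (l - 1)) (eisenstein (k - l + 2))) n"
    proof (cases "n = 0")
      case True
      then show ?thesis using kl assms
        by (cases "l = 1") (auto simp: qD_pow_nth Hc_def Hs_def eisenstein_def kronecker_def)
    next
      case False
      then show ?thesis using divsum1[of n l k] kl assms
        by (simp add: qD_pow_nth Hs_def eisenstein_def)
    qed
  qed
next
  assume kl: "k + 2 \<le> l"
  show "qbracket (T k l) = (qD ^^ k) (eisenstein (l - k))"
    unfolding qbracket_T
  proof (rule fps_ext)
    fix n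
    show "fps_nth (fps_const (Hc k l) + Hs k l) n = fps_nth ((qD ^^ k) (eisenstein (l - k))) n"
    proof (cases "n = 0")
      case True
      then show ?thesis using kl assms
        by (cases "k = 0") (auto simp: qD_pow_nth Hc_def Hs_def eisenstein_def kronecker_def)
    next
      case False
      then show ?thesis using divsum2[of n k l] kl assms
        by (simp add: qD_pow_nth Hs_def eisenstein_def)
    qed
  qed
qed

end
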